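(* Let $k\ge1$ and let $\alpha_1,\dots,\alpha_k\in[0,1]$. Define accountability weights $$w_j=\Bigl(\prod_{\ell=1}^{j}\alpha_\ell\Bigr)(1-\alpha_{j+1})\quad (j=1,\dots,k-1),\qquad w_k=\prod_{\ell=1}^{k}\alpha_\ell,$$ and let $\bar\alpha=\max_{\ell}\alpha_\ell$. Then $$\max_{j\in\{1,\dots,k\}}w_j\le 1-(1-\bar\alpha)^k.$$ In particular, if $\bar\alpha<1$, then $\max_j w_j<1$ for every finite $k$.
   Context: The $\alpha_\ell$ are the delegation degrees along a delegation chain of length $k$ (agent $\ell$ delegates to agent $\ell+1$ with degree $\alpha_\ell$); $w_j$ is the accountability weight of the $j$-th agent in the chain. *)

theory Defs
  imports Complex_Main
begin

definition acc_weight :: "(nat \<Rightarrow> real) \<Rightarrow> nat \<Rightarrow> nat \<Rightarrow> real" where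
  "acc_weight \<alpha> k j =
     (if j < k then (\<Prod>l=1..j. \<alpha> l) * (1 - \<alpha> (j+1)) else (\<Prod>l=1..k. \<alpha> l))"

end

theory Submission
  imports Defs
begin

lemma prod_le_first:
  fixes \<alpha> :: "nat \<Rightarrow> real"
  assumes "1 \<le> j" "j \<le> k" "\<And>l. l \<in> {1..k} \<Longrightarrow> 0 \<le> \<alpha> l \<and> \<alpha> l \<le> 1"
  shows "(\<Prod>l=1..j. \<alpha> l) \<le> \<alpha> 1" "0 \<le> (\<Prod>l=1..j. \<alpha> l)"
proof -
  have split: "{1..j} = insert 1 {2..j}" using assms(1) by auto
  have p: "(\<Prod>l=1..j. \<alpha> l) = \<alpha> 1 * (\<Prod>l=2..j. \<alpha> l)"
    unfolding split by (subst prod.insert) auto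
  have "(\<Prod>l=2..j. \<alpha> l) \<le> 1" "0 \<le> (\<Prod>l=2..j. \<alpha> l)"
    using assms by (auto intro!: prod_le_1 prod_nonneg)
  moreover have "0 \<le> \<alpha> 1" "\<alpha> 1 \<le> 1" using assms by auto
  ultimately show "(\<Prod>l=1..j. \<alpha> l) \<le> \<alpha> 1" "0 \<le> (\<Prod>l=1..j. \<alpha> l)"
    unfolding p by (auto simp: mult_left_le)
qed

theorem proposition1:
  fixes \<alpha> :: "nat \<Rightarrow> real" and k :: nat
  assumes "k \<ge> 1"
    and "\<And>l. l \<in> {1..k} \<Longrightarrow> 0 \<le> \<alpha> l \<and> \<alpha> l \<le> 1"
  shows "(MAX j\<in>{1..k}. acc_weight \<alpha> k j) \<le> 1 - (1 - (MAX l\<in>{1..k}. \<alpha> l)) ^ k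
         \<and> ((MAX l\<in>{1..k}. \<alpha> l) < 1 \<longrightarrow> (MAX j\<in>{1..k}. acc_weight \<alpha> k j) < 1)"
proof -
  define M where "M = (MAX l\<in>{1..k}. \<alpha> l)"
  have ne: "{1..k} \<noteq> {}" using assms(1) by auto
  have a1M: "\<alpha> 1 \<le> M" unfolding M_def using assms(1) by (intro Max_ge) auto
  have M1: "M \<le> 1" unfolding M_def using assms(2) ne by (subst Max_le_iff) auto
  have M0: "0 \<le> M" using a1M assms(2)[of 1] assms(1) by auto
  have w: "acc_weight \<alpha> k j \<le> \<alpha> 1" if "j \<in> {1..k}" for j
  proof (cases "j < k")
    case True
    have "\<alpha> (j+1) \<le> 1" "0 \<le> \<alpha> (j+1)" using assms(2)[of "j+1"] that True by auto
    moreover note prod_le_first[of j k \<alpha>] 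
    ultimately show ?thesis using that assms True unfolding acc_weight_def
      by (auto intro: order_trans[OF mult_left_le])
  next
    case False
    then show ?thesis using prod_le_first[of k k \<alpha>] assms unfolding acc_weight_def by auto
  qed
  have W: "(MAX j\<in>{1..k}. acc_weight \<alpha> k j) \<le> M"
    using ne w a1M by (subst Max_le_iff) force+
  have "(1 - M) ^ k \<le> (1 - M) ^ 1"
    by (rule power_decreasing) (use assms(1) M0 M1 in auto)
  hence A: "M \<le> 1 - (1 - M) ^ k" by simp
  have B: "M < 1 \<longrightarrow> 0 < (1 - M) ^ k" by simp
  show ?thesis using W A B unfolding M_def[symmetric] by auto
qed

end
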